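(* Let $q$ be a prime power and let $M$ be a $2\times 2$ matrix over $\mathbb{F}_{q^2}$ with two distinct eigenvalues $c_1,c_2$ and eigenvectors $u_1,u_2\in\mathbb{F}_{q^2}^2$ ($u_i$ an eigenvector for $c_i$) such that $\langle u_i,u_i\rangle=0$ for $i=1,2$. Then there is $o\in\mathbb{F}_{q^2}^*$ such that $\mathrm{Num}'_0(M)=\{to\}_{t\in\mathbb{F}_q}$.
   Context: The Hermitian form on $\mathbb{F}_{q^2}^n$ is $\langle u,v\rangle=\sum_i u_i^q v_i$. For an $n\times n$ matrix $M$ over $\mathbb{F}_{q^2}$ with $n\ge 2$, $\mathrm{Num}'_0(M)=\{\langle u,Mu\rangle: u\in\mathbb{F}_{q^2}^n\setminus\{0\},\ \langle u,u\rangle=0\}$. *)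

theory Defs
  imports "HOL-Analysis.Analysis"
begin

definition herm :: "nat \<Rightarrow> 'a::field ^ 'n \<Rightarrow> 'a ^ 'n \<Rightarrow> 'a" where
  "herm q u v = (\<Sum>i\<in>UNIV. (u $ i) ^ q * v $ i)"

definition Num0' :: "nat \<Rightarrow> 'a::field ^ 'n ^ 'n \<Rightarrow> 'a set" where
  "Num0' q M = {herm q u (M *v u) | u. u \<noteq> 0 \<and> herm q u u = 0}"

definition subfield_Fq :: "nat \<Rightarrow> 'a::field set" where
  "subfield_Fq q = {t. t ^ q = t}"

end

theory Submission
  imports Defs "HOL-Number_Theory.Number_Theory" "HOL-Computational_Algebra.Polynomial"
begin

lemma pow_card_same:
  fixes x :: "'a::{finite,field}"
  shows "x ^ CARD('a) = x"
proof (cases "x = 0")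
  case False
  have "x * (\<Prod>y\<in>UNIV-{0}. x * y) = x * x ^ (card (UNIV :: 'a set) - 1) * \<Prod>(UNIV-{0})"
    by (simp add: prod.distrib mult_ac)
  also have "x * x ^ (card (UNIV :: 'a set) - 1) = x ^ Suc (card (UNIV :: 'a set) - 1)"
    by (subst power_Suc) auto
  also have "Suc (card (UNIV :: 'a set) - 1) = card (UNIV :: 'a set)"
    using finite_UNIV_card_ge_0[where ?'a = 'a] by simp
  also have "(\<Prod>y\<in>UNIV-{0}. x * y) = (\<Prod>y\<in>UNIV-{0}. y)"
    by (rule prod.reindex_bij_witness[of _ "\<lambda>y. y / x" "\<lambda>y. x * y"]) (use False in auto)
  finally show ?thesis
    by simp
qed (use finite_UNIV_card_ge_0[where ?'a = 'a] in auto)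

lemma frob_facts:
  fixes q :: nat
  assumes "\<exists>p k. prime p \<and> k > 0 \<and> q = p ^ k"
    and "CARD('a::{finite,field}) = q ^ 2"
  shows "(\<forall>x y::'a. (x+y)^q = x^q + y^q) \<and> (\<forall>x::'a. (x^q)^q = x) \<and> q \<ge> 2"
proof -
  obtain p k where pk: "prime p" "k > 0" "q = p ^ k" using assms(1) by blast
  have cpos: "CHAR('a) > 0" by (rule finite_imp_CHAR_pos) simp
  have cpr: "prime CHAR('a)" using prime_CHAR_semidom[OF cpos] .
  have "CHAR('a) dvd (p ^ k)^2" using CHAR_dvd_CARD[where 'a='a] assms(2) pk
    by simp
  hence "CHAR('a) dvd p ^ (k*2)" by (simp add: power_mult)
  hence "CHAR('a) dvd p" using cpr prime_dvd_power by blast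
  hence cp: "CHAR('a) = p" using cpr pk(1) primes_dvd_imp_eq by blast
  have add: "\<forall>x y::'a. (x+y)^q = x^q + y^q"
    using freshmans_dream'[OF cpr, of q k] cp pk by auto
  have "\<forall>x::'a. (x^q)^q = x"
  proof
    fix x :: 'a
    have "(x^q)^q = x ^ (q^2)" by (simp add: power_mult[symmetric] power2_eq_square)
    also have "\<dots> = x" using pow_card_same[of x] assms(2) by simp
    finally show "(x^q)^q = x" .
  qed
  moreover have "p \<ge> 2" using pk prime_ge_2_nat by blast
  hence "q \<ge> 2" using pk self_le_power[of p k] by linarith
  ultimately show ?thesis using add by blast
qed

lemma sum_pow_q:
  fixes f :: "'b \<Rightarrow> 'a::field"
  assumes add: "\<forall>x y::'a. (x+y)^q = x^q + y^q" and "q > 0" and "finite A"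
  shows "(sum f A)^q = (\<Sum>i\<in>A. (f i)^q)"
  using assms(3) by (induction A rule: finite_induct) (auto simp: add assms(2))

lemma herm_left:
  fixes u v w :: "'a::field ^ 'n"
  assumes add: "\<forall>x y::'a. (x+y)^q = x^q + y^q"
  shows "herm q (a *s u + b *s v) w = a^q * herm q u w + b^q * herm q v w"
  unfolding herm_def
  by (simp add: add power_mult_distrib sum.distrib sum_distrib_left algebra_simps)

lemma herm_right:
  fixes u v w :: "'a::field ^ 'n"
  shows "herm q u (a *s v + b *s w) = a * herm q u v + b * herm q u w"
  unfolding herm_def
  by (simp add: sum.distrib sum_distrib_left algebra_simps)

lemma herm_sym:
  fixes u v :: "'a::field ^ 'n"
  assumes add: "\<forall>x y::'a. (x+y)^q = x^q + y^q" and inv: "\<forall>x::'a. (x^q)^q = x" and "q > 0"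
  shows "herm q v u = (herm q u v)^q"
  unfolding herm_def
  by (simp add: sum_pow_q[OF add \<open>q>0\<close>] power_mult_distrib inv mult.commute)

lemma span2:
  fixes x1 y1 x2 y2 w1 w2 d :: "'a::field"
  assumes dd: "d = x1*y2 - x2*y1" and dnz: "d \<noteq> 0"
  shows "w1 = ((w1*y2 - x2*w2)/d)*x1 + ((x1*w2 - y1*w1)/d)*x2
     \<and> w2 = ((w1*y2 - x2*w2)/d)*y1 + ((x1*w2 - y1*w1)/d)*y2"
proof -
  have "((w1*y2 - x2*w2)/d)*x1 + ((x1*w2 - y1*w1)/d)*x2
      = ((w1*y2 - x2*w2)*x1 + (x1*w2 - y1*w1)*x2)/d"
    by (simp only: add_divide_distrib times_divide_eq_left)
  also have "\<dots> = (w1*d)/d" by (simp add: dd algebra_simps)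
  also have "\<dots> = w1" using dnz by simp
  moreover have "((w1*y2 - x2*w2)/d)*y1 + ((x1*w2 - y1*w1)/d)*y2
      = ((w1*y2 - x2*w2)*y1 + (x1*w2 - y1*w1)*y2)/d"
    by (simp only: add_divide_distrib times_divide_eq_left)
  moreover have "((w1*y2 - x2*w2)*y1 + (x1*w2 - y1*w1)*y2)/d = (w2*d)/d" by (simp add: dd algebra_simps)
  moreover have "(w2*d)/d = w2" using dnz by simp
  ultimately show ?thesis by simp
qed

theorem proposition3:
  fixes q :: nat and M :: "'a::{finite,field} ^ 2 ^ 2"
    and c1 c2 :: 'a and u1 u2 :: "'a ^ 2"
  assumes "\<exists>p k. prime p \<and> k > 0 \<and> q = p ^ k"
    and "CARD('a) = q ^ 2"
    and "c1 \<noteq> c2"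
    and "u1 \<noteq> 0" and "M *v u1 = c1 *s u1"
    and "u2 \<noteq> 0" and "M *v u2 = c2 *s u2"
    and "herm q u1 u1 = 0" and "herm q u2 u2 = 0"
  shows "\<exists>w. w \<noteq> 0 \<and> Num0' q M = {t * w | t. t \<in> subfield_Fq q}"
proof -
  note ff = frob_facts[OF assms(1,2)]
  have add: "\<forall>x y::'a. (x+y)^q = x^q + y^q" and inv: "\<forall>x::'a. (x^q)^q = x"
    and q2: "q \<ge> 2" using ff by auto
  have qpos: "q > 0" using q2 by simp
  define h where "h = herm q u1 u2"
  have hsym: "herm q u2 u1 = h^q" unfolding h_def using herm_sym[OF add inv qpos] .
  have comp: "herm q (a *s u1 + b *s u2) (a *s u1 + b *s u2) = a^q*b*h + (a^q*b*h)^q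
     \<and> herm q (a *s u1 + b *s u2) (M *v (a *s u1 + b *s u2)) = c2*(a^q*b*h) + c1*(a^q*b*h)^q"
    for a b
  proof -
    have e: "(a^q*b*h)^q = a * b^q * h^q" by (simp add: power_mult_distrib inv)
    have mv: "M *v (a *s u1 + b *s u2) = (a*c1) *s u1 + (b*c2) *s u2"
      by (simp add: matrix_vector_right_distrib vector_scalar_commute assms(5,7))
    show ?thesis unfolding e mv
      by (simp add: herm_left[OF add] herm_right assms(8,9) hsym h_def[symmetric] algebra_simps)
  qed
  define d where "d = u1$1*u2$2 - u2$1*u1$2"
  have dnz: "d \<noteq> 0"
  proof
    assume d0: "d = 0"
    obtain l where l: "u2 = l *s u1"
    proof (cases "u1$1 = 0")
      case True
      with assms(4) have y: "u1$2 \<noteq> 0" by (auto simp: vec_eq_iff forall_2)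
      from d0 True y have "u2$1 = 0" by (simp add: d_def)
      thus ?thesis using that[of "u2$2/u1$2"] y True by (auto simp: vec_eq_iff forall_2)
    next
      case False
      from d0 have "u2$2 * u1$1 = u2$1*u1$2" by (simp add: d_def algebra_simps)
      thus ?thesis using that[of "u2$1/u1$1"] False
        by (auto simp: vec_eq_iff forall_2 field_simps)
    qed
    have "c2 *s u2 = c1 *s u2"
      using assms(5,7) l by (metis vector_scalar_commute vector_smult_assoc mult.commute)
    hence "(c2 - c1) *s u2 = 0" by (simp add: vector_ssub_ldistrib)
    thus False using assms(3,6) by (simp add: vec_eq_iff forall_2)
  qed
  have span: "u = ((u$1*u2$2 - u2$1*u$2)/d) *s u1 + ((u1$1*u$2 - u1$2*u$1)/d) *s u2" for u :: "'a^2"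
    using span2[OF _ dnz, of "u1$1" "u2$2" "u2$1" "u1$2" "u$1" "u$2"] d_def
    by (simp add: vec_eq_iff forall_2)
  have hnz: "h \<noteq> 0"
  proof
    assume h0: "h = 0"
    define e :: "'a^2" where "e = (\<chi> i. if i = 1 then 1 else 0)"
    have "herm q e e = 1" unfolding herm_def e_def using qpos by (simp add: sum_2)
    moreover have "herm q e e = 0"
      using comp[of "(e$1*u2$2 - u2$1*e$2)/d" "(u1$1*e$2 - u1$2*e$1)/d"] span[of e] h0 qpos
      by simp
    ultimately show False by simp
  qed
  have fq_card: "card {t::'a. t^q = t} \<le> q"
  proof -
    define P :: "'a poly" where "P = Polynomial.monom 1 q - [:0,1:]"
    have ev: "poly P x = x^q - x" for x by (simp add: P_def poly_monom)
    obtain n where qn: "q = Suc (Suc n)" using q2 by (metis add_2_eq_Suc le_Suc_ex add.commute)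
    have "Polynomial.coeff P q = 1" unfolding qn by (simp add: P_def coeff_monom qn)
    hence Pnz: "P \<noteq> 0" by auto
    have dg: "degree P \<le> q" unfolding P_def using q2
      by (intro degree_diff_le) (auto simp: degree_monom_le)
    have "{t::'a. t^q = t} = {x. poly P x = 0}" by (simp add: ev)
    thus ?thesis using card_poly_roots_bound[OF Pnz] dg by simp
  qed
  have sub: "(x - y)^q = x^q - y^q" for x y :: 'a
  proof -
    have "x^q = ((x-y)+y)^q" by simp
    also have "\<dots> = (x-y)^q + y^q" using add by blast
    finally show ?thesis by simp
  qed
  obtain w0 :: 'a where w0: "w0 \<noteq> 0" "w0^q = - w0"
  proof (rule ccontr)
    assume "\<not> thesis"
    hence nw: "\<And>w::'a. w^q = -w \<Longrightarrow> w = 0" using that by blast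
    define Tr where "Tr = (\<lambda>x::'a. x + x^q)"
    have "inj Tr"
    proof (rule injI)
      fix x y assume "Tr x = Tr y"
      hence "(x-y)^q = -(x-y)" unfolding Tr_def sub by (simp add: algebra_simps)
      thus "x = y" using nw by fastforce
    qed
    hence "card (range Tr) = q^2" using assms(2) by (simp add: card_image)
    moreover have "range Tr \<subseteq> {t. t^q = t}"
      unfolding Tr_def using add inv by (auto simp: add_ac)
    hence "card (range Tr) \<le> q" using le_trans[OF card_mono[OF finite] fq_card] by blast
    moreover have "q < q^2" using q2 by (simp add: power2_eq_square)
    ultimately show False by simp
  qed
  have lin0: "1 *s u1 + b *s u2 \<noteq> 0" for b
  proof
    assume "1 *s u1 + b *s u2 = 0"
    hence "u1$1 = - b * u2$1" "u1$2 = - b * u2$2" by (auto simp: vec_eq_iff forall_2 eq_neg_iff_add_eq_0)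
    hence "d = 0" by (simp add: d_def algebra_simps)
    thus False using dnz by simp
  qed
  show ?thesis
  proof (intro exI[of _ "(c2 - c1) * w0"] conjI)
    show "(c2 - c1) * w0 \<noteq> 0" using w0 assms(3) by simp
    show "Num0' q M = {t * ((c2 - c1) * w0) |t. t \<in> subfield_Fq q}"
    proof (intro equalityI subsetI)
      fix z assume "z \<in> Num0' q M"
      then obtain u where u: "u \<noteq> 0" "herm q u u = 0" "z = herm q u (M *v u)"
        unfolding Num0'_def by blast
      define a where "a = (u$1*u2$2 - u2$1*u$2)/d"
      define b where "b = (u1$1*u$2 - u1$2*u$1)/d"
      have ue: "u = a *s u1 + b *s u2" using span[of u] unfolding a_def b_def .
      define s where "s = a^q*b*h"
      have ss: "s + s^q = 0" and zs: "z = c2 * s + c1 * s^q"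
        using comp[of a b] u unfolding ue[symmetric] s_def by auto
      have sq: "s^q = -s" using ss by (simp add: eq_neg_iff_add_eq_0 add.commute)
      define t where "t = s / w0"
      have "t^q = t" unfolding t_def power_divide sq w0(2) by simp
      moreover have "z = t * ((c2 - c1) * w0)" unfolding zs sq t_def using w0(1)
        by (simp add: algebra_simps)
      ultimately show "z \<in> {t * ((c2 - c1) * w0) |t. t \<in> subfield_Fq q}"
        unfolding subfield_Fq_def by blast
    next
      fix z assume "z \<in> {t * ((c2 - c1) * w0) |t. t \<in> subfield_Fq q}"
      then obtain t where t: "t^q = t" "z = t * ((c2 - c1) * w0)"
        unfolding subfield_Fq_def by blast
      define s where "s = t * w0"
      have sq: "s^q = -s" unfolding s_def power_mult_distrib t(1) w0(2) by simp
      have s1: "(1::'a)^q*(s/h)*h = s" using hnz by simp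
      define v where "v = 1 *s u1 + (s/h) *s u2"
      have c0: "herm q v v = s + s^q \<and> herm q v (M *v v) = c2 * s + c1 * s^q"
        using comp[of 1 "s/h"] unfolding s1 v_def .
      have c: "herm q v v = 0" "herm q v (M *v v) = z"
        using c0 sq unfolding t(2) s_def by (auto simp: algebra_simps)
      thus "z \<in> Num0' q M" unfolding Num0'_def using lin0[of "s/h"] v_def by blast
    qed
  qed
qed

end
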